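(* Let $G$ be a locally compact group, $X$ a proper $G$-space and $Y$ any $G$-space. Let $C\subset X$ be a closed small subset of $X$ meeting each $G$-orbit of $X$ in exactly one point. Then every continuous map $f:C\to Y$ such that $G_c\subset G_{f(c)}$ for all $c\in C$ has a unique extension to a continuous equivariant map $F:X\to Y$.
   Context: All spaces are completely regular Hausdorff. A $G$-space is a space $X$ with a continuous action $G\times X\to X$, $(g,x)\mapsto gx$, with $ex=x$ and $(gh)x=g(hx)$. $G_x=\{g\in G\mid gx=x\}$ is the stabilizer of $x$. A map $F$ is equivariant if $F(gx)=gF(x)$. For $U,V\subset X$ the transporter is $\langle U,V\rangle=\{g\in G\mid gU\cap V\neq\emptyset\}$; $U$ and $V$ are thin relative to each other if $\langle U,V\rangle$ has compact closure in $G$. A subset $U\subset X$ is small if every point of $X$ has a neighborhood thin relative to $U$. For $G$ locally compact, a $G$-space $X$ is proper if every point of $X$ has a small neighborhood. *)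

theory Defs
  imports "HOL-Analysis.Analysis"
begin

text \<open>Standing convention: all spaces are completely regular Hausdorff.\<close>
definition crH :: "'a topology \<Rightarrow> bool" where
  "crH T \<longleftrightarrow> completely_regular_space T \<and> Hausdorff_space T"

definition topological_group ::
  "'g topology \<Rightarrow> ('g \<Rightarrow> 'g \<Rightarrow> 'g) \<Rightarrow> 'g \<Rightarrow> ('g \<Rightarrow> 'g) \<Rightarrow> bool" where
  "topological_group TG m e i \<longleftrightarrow>
     crH TG \<and>
     e \<in> topspace TG \<and>
     (\<forall>g\<in>topspace TG. \<forall>h\<in>topspace TG. m g h \<in> topspace TG) \<and>
     (\<forall>g\<in>topspace TG. i g \<in> topspace TG) \<and>
     (\<forall>g\<in>topspace TG. \<forall>h\<in>topspace TG. \<forall>k\<in>topspace TG. m (m g h) k = m g (m h k)) \<and>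
     (\<forall>g\<in>topspace TG. m e g = g \<and> m g e = g) \<and>
     (\<forall>g\<in>topspace TG. m (i g) g = e \<and> m g (i g) = e) \<and>
     continuous_map (prod_topology TG TG) TG (\<lambda>(g, h). m g h) \<and>
     continuous_map TG TG i"

definition G_space ::
  "'g topology \<Rightarrow> ('g \<Rightarrow> 'g \<Rightarrow> 'g) \<Rightarrow> 'g \<Rightarrow> 'x topology \<Rightarrow> ('g \<Rightarrow> 'x \<Rightarrow> 'x) \<Rightarrow> bool" where
  "G_space TG m e X act \<longleftrightarrow>
     crH X \<and>
     continuous_map (prod_topology TG X) X (\<lambda>(g, x). act g x) \<and>
     (\<forall>x\<in>topspace X. act e x = x) \<and>
     (\<forall>g\<in>topspace TG. \<forall>h\<in>topspace TG. \<forall>x\<in>topspace X. act (m g h) x = act g (act h x))"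

definition stabilizer :: "'g topology \<Rightarrow> ('g \<Rightarrow> 'x \<Rightarrow> 'x) \<Rightarrow> 'x \<Rightarrow> 'g set" where
  "stabilizer TG act x = {g \<in> topspace TG. act g x = x}"

definition orbit :: "'g topology \<Rightarrow> ('g \<Rightarrow> 'x \<Rightarrow> 'x) \<Rightarrow> 'x \<Rightarrow> 'x set" where
  "orbit TG act x = {act g x | g. g \<in> topspace TG}"

definition transporter :: "'g topology \<Rightarrow> ('g \<Rightarrow> 'x \<Rightarrow> 'x) \<Rightarrow> 'x set \<Rightarrow> 'x set \<Rightarrow> 'g set" where
  "transporter TG act U V = {g \<in> topspace TG. \<exists>u\<in>U. act g u \<in> V}"

definition thin :: "'g topology \<Rightarrow> ('g \<Rightarrow> 'x \<Rightarrow> 'x) \<Rightarrow> 'x set \<Rightarrow> 'x set \<Rightarrow> bool" where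
  "thin TG act U V \<longleftrightarrow> compactin TG (TG closure_of (transporter TG act U V))"

definition small :: "'g topology \<Rightarrow> 'x topology \<Rightarrow> ('g \<Rightarrow> 'x \<Rightarrow> 'x) \<Rightarrow> 'x set \<Rightarrow> bool" where
  "small TG X act U \<longleftrightarrow>
     (\<forall>x\<in>topspace X. \<exists>N. N \<subseteq> topspace X \<and> x \<in> X interior_of N \<and> thin TG act N U)"

text \<open>Proper G-space (G locally compact assumed separately).\<close>
definition proper_G_space :: "'g topology \<Rightarrow> 'x topology \<Rightarrow> ('g \<Rightarrow> 'x \<Rightarrow> 'x) \<Rightarrow> bool" where
  "proper_G_space TG X act \<longleftrightarrow>
     (\<forall>x\<in>topspace X. \<exists>N. N \<subseteq> topspace X \<and> x \<in> X interior_of N \<and> small TG X act N)"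

definition equivariant ::
  "'g topology \<Rightarrow> 'x topology \<Rightarrow> ('g \<Rightarrow> 'x \<Rightarrow> 'x) \<Rightarrow> ('g \<Rightarrow> 'y \<Rightarrow> 'y) \<Rightarrow> ('x \<Rightarrow> 'y) \<Rightarrow> bool" where
  "equivariant TG X actX actY F \<longleftrightarrow>
     (\<forall>g\<in>topspace TG. \<forall>x\<in>topspace X. F (actX g x) = actY g (F x))"

end

theory Submission
  imports Defs
begin

lemma tg_rules:
  assumes "topological_group TG m e i"
  shows tg_e: "e \<in> topspace TG"
    and tg_m: "\<And>g h. g \<in> topspace TG \<Longrightarrow> h \<in> topspace TG \<Longrightarrow> m g h \<in> topspace TG"
    and tg_i: "\<And>g. g \<in> topspace TG \<Longrightarrow> i g \<in> topspace TG"
    and tg_assoc: "\<And>g h k. g \<in> topspace TG \<Longrightarrow> h \<in> topspace TG \<Longrightarrow> k \<in> topspace TG \<Longrightarrow> m (m g h) k = m g (m h k)"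
    and tg_el: "\<And>g. g \<in> topspace TG \<Longrightarrow> m e g = g"
    and tg_er: "\<And>g. g \<in> topspace TG \<Longrightarrow> m g e = g"
    and tg_il: "\<And>g. g \<in> topspace TG \<Longrightarrow> m (i g) g = e"
    and tg_ir: "\<And>g. g \<in> topspace TG \<Longrightarrow> m g (i g) = e"
    and tg_cont_i: "continuous_map TG TG i"
  using assms unfolding topological_group_def by auto

lemma grp_facts:
  assumes G: "topological_group TG m e i"
  shows "\<And>g. g \<in> topspace TG \<Longrightarrow> i (i g) = g"
    and "i e = e"
    and "\<And>a b. a \<in> topspace TG \<Longrightarrow> b \<in> topspace TG \<Longrightarrow> i (m a b) = m (i b) (i a)"
proof -
  show "i (i g) = g" if g: "g \<in> topspace TG" for g
  proof -
    have ig: "i g \<in> topspace TG" "i (i g) \<in> topspace TG" using tg_i[OF G] g by auto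
    have "i (i g) = m (i (i g)) (m (i g) g)" using tg_il[OF G g] tg_er[OF G ig(2)] by simp
    also have "\<dots> = m (m (i (i g)) (i g)) g" using tg_assoc[OF G ig(2) ig(1) g] by simp
    also have "\<dots> = m e g" using tg_il[OF G ig(1)] by simp
    also have "\<dots> = g" using tg_el[OF G g] by simp
    finally show ?thesis .
  qed
  show "i e = e"
  proof -
    have ie: "i e \<in> topspace TG" using tg_i[OF G tg_e[OF G]] .
    have "i e = m (i e) e" using tg_er[OF G ie] by simp
    also have "\<dots> = e" using tg_il[OF G tg_e[OF G]] by simp
    finally show ?thesis .
  qed
  show "i (m a b) = m (i b) (i a)" if a: "a \<in> topspace TG" and b: "b \<in> topspace TG" for a b
  proof -
    define p where "p = m a b"
    define q where "q = m (i b) (i a)"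
    have ia: "i a \<in> topspace TG" and ib: "i b \<in> topspace TG" using tg_i[OF G] a b by auto
    have p: "p \<in> topspace TG" "i p \<in> topspace TG" using tg_m[OF G a b] tg_i[OF G] by (auto simp: p_def)
    have q: "q \<in> topspace TG" using tg_m[OF G ib ia] by (simp add: q_def)
    have "m p q = m a (m b (m (i b) (i a)))"
      using tg_assoc[OF G a b tg_m[OF G ib ia]] by (simp add: p_def q_def)
    also have "\<dots> = m a (m (m b (i b)) (i a))" using tg_assoc[OF G b ib ia] by simp
    also have "\<dots> = e" using tg_ir[OF G b] tg_el[OF G ia] tg_ir[OF G a] by simp
    finally have pq: "m p q = e" .
    have "i p = m (i p) (m p q)" using pq tg_er[OF G p(2)] by simp
    also have "\<dots> = m (m (i p) p) q" using tg_assoc[OF G p(2) p(1) q] by simp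
    also have "\<dots> = q" using tg_il[OF G p(1)] tg_el[OF G q] by simp
    finally show ?thesis by (simp add: p_def q_def)
  qed
qed

lemma gs_rules:
  assumes "G_space TG m e X act"
  shows gs_cont: "continuous_map (prod_topology TG X) X (\<lambda>(g, x). act g x)"
    and gs_e: "\<And>x. x \<in> topspace X \<Longrightarrow> act e x = x"
    and gs_m: "\<And>g h x. g \<in> topspace TG \<Longrightarrow> h \<in> topspace TG \<Longrightarrow> x \<in> topspace X \<Longrightarrow> act (m g h) x = act g (act h x)"
  using assms unfolding G_space_def by auto

lemma act_facts:
  assumes G: "topological_group TG m e i" and A: "G_space TG m e X act"
  shows "\<And>g x. g \<in> topspace TG \<Longrightarrow> x \<in> topspace X \<Longrightarrow> act g x \<in> topspace X"
    and "\<And>g x. g \<in> topspace TG \<Longrightarrow> x \<in> topspace X \<Longrightarrow> act (i g) (act g x) = x"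
    and "\<And>g x. g \<in> topspace TG \<Longrightarrow> x \<in> topspace X \<Longrightarrow> act g (act (i g) x) = x"
proof -
  show 1: "act g x \<in> topspace X" if "g \<in> topspace TG" "x \<in> topspace X" for g x
  proof -
    have "(\<lambda>(g, x). act g x) (g,x) \<in> topspace X"
      using gs_cont[OF A] that continuous_map_funspace[of "prod_topology TG X" X "\<lambda>(g, x). act g x"] by (force simp: Pi_iff)
    then show ?thesis by simp
  qed
  show "act (i g) (act g x) = x" if g: "g \<in> topspace TG" and x: "x \<in> topspace X" for g x
  proof -
    have "act (i g) (act g x) = act (m (i g) g) x" using gs_m[OF A tg_i[OF G g] g x] by simp
    also have "\<dots> = x" using tg_il[OF G g] gs_e[OF A x] by simp
    finally show ?thesis .
  qed
  show "act g (act (i g) x) = x" if g: "g \<in> topspace TG" and x: "x \<in> topspace X" for g x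
  proof -
    have "act g (act (i g) x) = act (m g (i g)) x" using gs_m[OF A g tg_i[OF G g] x] by simp
    also have "\<dots> = x" using tg_ir[OF G g] gs_e[OF A x] by simp
    finally show ?thesis .
  qed
qed

theorem corollary4p3:
  fixes TG :: "'g topology" and m :: "'g \<Rightarrow> 'g \<Rightarrow> 'g" and e :: 'g and i :: "'g \<Rightarrow> 'g"
    and X :: "'x topology" and actX :: "'g \<Rightarrow> 'x \<Rightarrow> 'x"
    and Y :: "'y topology" and actY :: "'g \<Rightarrow> 'y \<Rightarrow> 'y"
    and C :: "'x set" and f :: "'x \<Rightarrow> 'y"
  assumes "topological_group TG m e i"
    and "locally_compact_space TG"
    and "G_space TG m e X actX"
    and "proper_G_space TG X actX"
    and "G_space TG m e Y actY"
    and "closedin X C"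
    and "small TG X actX C"
    and "\<forall>x\<in>topspace X. \<exists>!c. c \<in> C \<and> c \<in> orbit TG actX x"
    and "continuous_map (subtopology X C) Y f"
    and "\<forall>c\<in>C. stabilizer TG actX c \<subseteq> stabilizer TG actY (f c)"
  shows "\<exists>F. continuous_map X Y F \<and> equivariant TG X actX actY F \<and> (\<forall>c\<in>C. F c = f c)
           \<and> (\<forall>F'. continuous_map X Y F' \<and> equivariant TG X actX actY F' \<and> (\<forall>c\<in>C. F' c = f c)
                  \<longrightarrow> (\<forall>x\<in>topspace X. F' x = F x))"
proof -
  note G = assms(1) and AX = assms(3) and AY = assms(5)
  have Csub: "C \<subseteq> topspace X" using assms(6) closedin_subset by blast
  have fY: "f c \<in> topspace Y" if "c \<in> C" for c
    using continuous_map_funspace[OF assms(9)] Csub that by (auto simp: Pi_iff)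
  note aX = act_facts[OF G AX] and aY = act_facts[OF G AY]
  define cx where "cx x = (THE c. c \<in> C \<and> c \<in> orbit TG actX x)" for x
  define hx where "hx x = (SOME h. h \<in> topspace TG \<and> actX h x = cx x)" for x
  define F where "F x = actY (i (hx x)) (f (cx x))" for x
  have cx: "cx x \<in> C \<and> cx x \<in> orbit TG actX x" if "x \<in> topspace X" for x
    unfolding cx_def using theI'[OF assms(8)[rule_format, OF that]] .
  have cx_uniq: "cx x = c" if "x \<in> topspace X" "c \<in> C" "c \<in> orbit TG actX x" for x c
    unfolding cx_def using the1_equality[OF assms(8)[rule_format, OF that(1)]] that by blast
  have hx: "hx x \<in> topspace TG \<and> actX (hx x) x = cx x" if x: "x \<in> topspace X" for x
  proof -
    have "cx x \<in> orbit TG actX x" using cx[OF x] by blast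
    then obtain g where "g \<in> topspace TG" "actX g x = cx x" unfolding orbit_def mem_Collect_eq by metis
    then show ?thesis unfolding hx_def by (rule someI[where P="\<lambda>h. h \<in> topspace TG \<and> actX h x = cx x", OF conjI])
  qed
  have L: "F x = actY (i g) (f (actX g x))"
    if x: "x \<in> topspace X" and g: "g \<in> topspace TG" and gC: "actX g x \<in> C" for x g
  proof -
    define c where "c = actX g x"
    have cC: "c \<in> C" and cXs: "c \<in> topspace X" using gC Csub by (auto simp: c_def)
    have "c \<in> orbit TG actX x" using g unfolding orbit_def c_def by blast
    then have cxx: "cx x = c" using cx_uniq x cC by blast
    define h where "h = hx x"
    have h: "h \<in> topspace TG" "actX h x = c" using hx[OF x] cxx by (auto simp: h_def)
    have ih: "i h \<in> topspace TG" using tg_i[OF G h(1)] .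
    have xc: "actX (i h) c = x" using aX(2)[OF h(1) x] h(2) by simp
    have "actX (m g (i h)) c = actX g (actX (i h) c)" using gs_m[OF AX g ih cXs] .
    also have "\<dots> = c" using xc c_def by simp
    finally have "m g (i h) \<in> stabilizer TG actX c"
      unfolding stabilizer_def using tg_m[OF G g ih] by simp
    then have "m g (i h) \<in> stabilizer TG actY (f c)" using assms(10) cC by blast
    then have st: "actY (m g (i h)) (f c) = f c" unfolding stabilizer_def by simp
    have fc: "f c \<in> topspace Y" using fY[OF cC] .
    have ihfc: "actY (i h) (f c) \<in> topspace Y" using aY(1)[OF ih fc] .
    have "actY (i g) (f c) = actY (i g) (actY g (actY (i h) (f c)))"
      using st gs_m[OF AY g ih fc] by simp
    also have "\<dots> = actY (i h) (f c)" using aY(2)[OF g ihfc] .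
    finally show ?thesis unfolding F_def h_def[symmetric] cxx c_def by simp
  qed
  have FY: "F x \<in> topspace Y" if "x \<in> topspace X" for x
    unfolding F_def using aY(1)[OF tg_i[OF G] fY] hx[OF that] cx[OF that] by blast
  have Fc: "F c = f c" if "c \<in> C" for c
  proof -
    have c: "c \<in> topspace X" using that Csub by blast
    have "F c = actY (i e) (f (actX e c))" using L[OF c tg_e[OF G]] gs_e[OF AX c] that by simp
    also have "\<dots> = f c" using grp_facts(2)[OF G] gs_e[OF AX c] gs_e[OF AY fY[OF that]] by simp
    finally show ?thesis .
  qed
  have equi: "equivariant TG X actX actY F"
    unfolding equivariant_def
  proof (intro ballI)
    fix g x assume g: "g \<in> topspace TG" and x: "x \<in> topspace X"
    define h where "h = hx x"
    define c where "c = cx x"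
    have h: "h \<in> topspace TG" "actX h x = c" using hx[OF x] by (auto simp: h_def c_def)
    have cC: "c \<in> C" using cx[OF x] by (simp add: c_def)
    have ig: "i g \<in> topspace TG" using tg_i[OF G g] .
    have gx: "actX g x \<in> topspace X" using aX(1)[OF g x] .
    have g': "m h (i g) \<in> topspace TG" using tg_m[OF G h(1) ig] .
    have "actX (m h (i g)) (actX g x) = actX h (actX (i g) (actX g x))" using gs_m[OF AX h(1) ig gx] .
    also have "\<dots> = c" using aX(2)[OF g x] h(2) by simp
    finally have e1: "actX (m h (i g)) (actX g x) = c" .
    have "F (actX g x) = actY (i (m h (i g))) (f c)" using L[OF gx g'] e1 cC by simp
    also have "i (m h (i g)) = m g (i h)" using grp_facts(3)[OF G h(1) ig] grp_facts(1)[OF G g] by simp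
    also have "actY (m g (i h)) (f c) = actY g (actY (i h) (f c))"
      using gs_m[OF AY g tg_i[OF G h(1)] fY[OF cC]] .
    also have "actY (i h) (f c) = F x" using L[OF x h(1)] h(2) cC by simp
    finally show "F (actX g x) = actY g (F x)" .
  qed
  have uniq: "\<forall>x\<in>topspace X. F' x = F x"
    if F': "equivariant TG X actX actY F'" "\<forall>c\<in>C. F' c = f c" for F'
  proof
    fix x assume x: "x \<in> topspace X"
    define h where "h = hx x"
    define c where "c = cx x"
    have h: "h \<in> topspace TG" "actX h x = c" using hx[OF x] by (auto simp: h_def c_def)
    have cC: "c \<in> C" using cx[OF x] by (simp add: c_def)
    have cX: "c \<in> topspace X" using cC Csub by blast
    have xc: "actX (i h) c = x" using aX(2)[OF h(1) x] h(2) by simp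
    have "F' (actX (i h) c) = actY (i h) (F' c)"
      using F'(1) tg_i[OF G h(1)] cX unfolding equivariant_def by blast
    then have "F' x = actY (i h) (F' c)" using xc by simp
    also have "\<dots> = actY (i h) (f c)" using F'(2) cC by simp
    also have "\<dots> = F x" using L[OF x h(1)] h(2) cC by simp
    finally show "F' x = F x" .
  qed
  have cont: "continuous_map X Y F"
    unfolding continuous_map_def
  proof (intro conjI allI impI)
    show "F \<in> topspace X \<rightarrow> topspace Y" using FY by blast
    fix W assume W: "openin Y W"
    show "openin X {x \<in> topspace X. F x \<in> W}"
      unfolding openin_subopen[of X "{x \<in> topspace X. F x \<in> W}"]
    proof (intro ballI)
      fix x0 assume "x0 \<in> {x \<in> topspace X. F x \<in> W}"
      then have x0: "x0 \<in> topspace X" "F x0 \<in> W" by auto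
      obtain N where N: "N \<subseteq> topspace X" "x0 \<in> X interior_of N" "thin TG actX N C"
        using assms(7) x0(1) unfolding small_def by blast
      define K where "K = TG closure_of (transporter TG actX N C)"
      have Kc: "compactin TG K" using N(3) unfolding thin_def K_def .
      have TK: "transporter TG actX N C \<subseteq> K"
        unfolding K_def by (rule closure_of_subset) (auto simp: transporter_def)
      have KG: "K \<subseteq> topspace TG" using compactin_subset_topspace[OF Kc] .
      have loc: "\<forall>k\<in>K. \<exists>U V. openin TG U \<and> openin X V \<and> k \<in> U \<and> x0 \<in> V \<and>
                   (\<forall>g\<in>U. \<forall>x\<in>V. actX g x \<in> C \<longrightarrow> F x \<in> W)"
      proof
        fix k assume "k \<in> K"
        then have k: "k \<in> topspace TG" using KG by blast
        show "\<exists>U V. openin TG U \<and> openin X V \<and> k \<in> U \<and> x0 \<in> V \<and>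
                   (\<forall>g\<in>U. \<forall>x\<in>V. actX g x \<in> C \<longrightarrow> F x \<in> W)"
        proof (cases "actX k x0 \<in> C")
          case False
          define Op where "Op = {z \<in> topspace (prod_topology TG X). (\<lambda>(g, x). actX g x) z \<in> topspace X - C}"
          have "openin X (topspace X - C)" using assms(6) unfolding closedin_def by blast
          then have Oo: "openin (prod_topology TG X) Op"
            unfolding Op_def by (rule openin_continuous_map_preimage[OF gs_cont[OF AX]])
          have "(k, x0) \<in> Op" unfolding Op_def using k x0(1) aX(1)[OF k x0(1)] False by simp
          then obtain U V where UV: "openin TG U" "openin X V" "k \<in> U" "x0 \<in> V" "U \<times> V \<subseteq> Op"
            using Oo[unfolded openin_prod_topology_alt, rule_format] by metis
          have "\<forall>g\<in>U. \<forall>x\<in>V. actX g x \<in> C \<longrightarrow> F x \<in> W"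
          proof (intro ballI impI)
            fix g x assume "g \<in> U" "x \<in> V" "actX g x \<in> C"
            then have "(g, x) \<in> Op" using UV(5) by blast
            then show "F x \<in> W" using \<open>actX g x \<in> C\<close> unfolding Op_def by simp
          qed
          then show ?thesis using UV by blast
        next
          case True
          define P where "P = prod_topology TG X"
          define D where "D = {z \<in> topspace P. (\<lambda>(g, x). actX g x) z \<in> C}"
          define \<phi> where "\<phi> z = actY (i (fst z)) (f (actX (fst z) (snd z)))" for z
          have c1: "continuous_map (subtopology P D) (subtopology X C) (\<lambda>(g, x). actX g x)"
            unfolding continuous_map_in_subtopology
            using continuous_map_from_subtopology[OF gs_cont[OF AX]] by (auto simp: D_def P_def)
          have c2: "continuous_map (subtopology P D) Y (f \<circ> (\<lambda>(g, x). actX g x))"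
            using continuous_map_compose[OF c1 assms(9)] .
          have c3: "continuous_map (subtopology P D) TG (i \<circ> fst)"
            using continuous_map_compose[OF continuous_map_from_subtopology[OF continuous_map_fst] tg_cont_i[OF G]]
            unfolding P_def .
          have c4: "continuous_map (subtopology P D) (prod_topology TG Y)
                     (\<lambda>z. ((i \<circ> fst) z, (f \<circ> (\<lambda>(g, x). actX g x)) z))"
            using continuous_map_pairedI[OF c3 c2] .
          have c5: "continuous_map (subtopology P D) Y
                     ((\<lambda>(g, y). actY g y) \<circ> (\<lambda>z. ((i \<circ> fst) z, (f \<circ> (\<lambda>(g, x). actX g x)) z)))"
            using continuous_map_compose[OF c4 gs_cont[OF AY]] .
          have "((\<lambda>(g, y). actY g y) \<circ> (\<lambda>z. ((i \<circ> fst) z, (f \<circ> (\<lambda>(g, x). actX g x)) z))) = \<phi>"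
            by (auto simp: fun_eq_iff \<phi>_def split: prod.split)
          then have c: "continuous_map (subtopology P D) Y \<phi>" using c5 by simp
          have "openin (subtopology P D) {z \<in> topspace (subtopology P D). \<phi> z \<in> W}"
            using openin_continuous_map_preimage[OF c W] .
          then obtain Op where Oo: "openin P Op"
            and Oeq: "{z \<in> topspace (subtopology P D). \<phi> z \<in> W} = Op \<inter> D"
            unfolding openin_subtopology by blast
          have kD: "(k, x0) \<in> D" unfolding D_def P_def using k x0(1) True by simp
          have "\<phi> (k, x0) = F x0" using L[OF x0(1) k True] by (simp add: \<phi>_def)
          then have "(k, x0) \<in> {z \<in> topspace (subtopology P D). \<phi> z \<in> W}"
            using kD x0(2) by (auto simp: D_def)
          then have "(k, x0) \<in> Op" using Oeq by blast
          then obtain U V where UV: "openin TG U" "openin X V" "k \<in> U" "x0 \<in> V" "U \<times> V \<subseteq> Op"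
            using Oo[unfolded P_def openin_prod_topology_alt, rule_format] by metis
          have "\<forall>g\<in>U. \<forall>x\<in>V. actX g x \<in> C \<longrightarrow> F x \<in> W"
          proof (intro ballI impI)
            fix g x assume g: "g \<in> U" and x: "x \<in> V" and gx: "actX g x \<in> C"
            have gT: "g \<in> topspace TG" using UV(1) g openin_subset by blast
            have xT: "x \<in> topspace X" using UV(2) x openin_subset by blast
            have "(g, x) \<in> D" unfolding D_def P_def using gT xT gx by simp
            moreover have "(g, x) \<in> Op" using UV(5) g x by blast
            ultimately have "(g, x) \<in> {z \<in> topspace (subtopology P D). \<phi> z \<in> W}" using Oeq by blast
            then have "\<phi> (g, x) \<in> W" by blast
            then show "F x \<in> W" using L[OF xT gT gx] by (simp add: \<phi>_def)
          qed
          then show ?thesis using UV by blast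
        qed
      qed
      obtain UU VV where H: "\<forall>k\<in>K. openin TG (UU k) \<and> openin X (VV k) \<and> k \<in> UU k \<and> x0 \<in> VV k \<and>
                   (\<forall>g\<in>UU k. \<forall>x\<in>VV k. actX g x \<in> C \<longrightarrow> F x \<in> W)"
      proof -
        obtain UU where H0: "\<forall>k\<in>K. \<exists>V. openin TG (UU k) \<and> openin X V \<and> k \<in> UU k \<and> x0 \<in> V \<and>
                   (\<forall>g\<in>UU k. \<forall>x\<in>V. actX g x \<in> C \<longrightarrow> F x \<in> W)"
          using bchoice[OF loc] by blast
        obtain VV where "\<forall>k\<in>K. openin TG (UU k) \<and> openin X (VV k) \<and> k \<in> UU k \<and> x0 \<in> VV k \<and>
                   (\<forall>g\<in>UU k. \<forall>x\<in>VV k. actX g x \<in> C \<longrightarrow> F x \<in> W)"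
          using bchoice[OF H0] by blast
        then show ?thesis using that by blast
      qed
      have cov: "K \<subseteq> \<Union>(UU ` K)" using H by blast
      have opn: "\<forall>U\<in>UU ` K. openin TG U" using H by blast
      have "\<exists>\<F>. finite \<F> \<and> \<F> \<subseteq> UU ` K \<and> K \<subseteq> \<Union>\<F>"
        using Kc[unfolded compactin_def] cov opn by blast
      then obtain \<F> where F1: "finite \<F>" "\<F> \<subseteq> UU ` K" "K \<subseteq> \<Union>\<F>" by blast
      obtain S where S: "S \<subseteq> K" "finite S" "\<F> = UU ` S"
        using finite_subset_image[OF F1(1,2)] by blast
      define V0 where "V0 = X interior_of N \<inter> ((\<Inter>k\<in>S. VV k) \<inter> topspace X)"
      have "openin X V0" unfolding V0_def
      proof (rule openin_Int[OF openin_interior_of])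
        show "openin X ((\<Inter>k\<in>S. VV k) \<inter> topspace X)"
          by (rule openin_INT[OF S(2)]) (use H S(1) in blast)
      qed
      moreover have "x0 \<in> V0" unfolding V0_def using N(2) x0(1) H S(1) by blast
      moreover have "V0 \<subseteq> {x \<in> topspace X. F x \<in> W}"
      proof
        fix x assume xV: "x \<in> V0"
        have xT: "x \<in> topspace X" and xN: "x \<in> N"
          using xV interior_of_subset[of X N] unfolding V0_def by blast+
        have h: "hx x \<in> topspace TG" "actX (hx x) x \<in> C" using hx[OF xT] cx[OF xT] by auto
        have "hx x \<in> transporter TG actX N C" unfolding transporter_def using h xN by blast
        then have "hx x \<in> \<Union>\<F>" using TK F1(3) by blast
        then obtain k where kS: "k \<in> S" "hx x \<in> UU k" using S(3) by blast
        have "x \<in> VV k" using xV kS(1) unfolding V0_def by blast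
        then have "F x \<in> W" using H kS S(1) h(2) by blast
        then show "x \<in> {x \<in> topspace X. F x \<in> W}" using xT by blast
      qed
      ultimately show "\<exists>T. openin X T \<and> x0 \<in> T \<and> T \<subseteq> {x \<in> topspace X. F x \<in> W}" by blast
    qed
  qed
  show ?thesis using cont equi Fc uniq by blast
qed

end
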